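(* Let $\mathcal{A}$ and $\mathcal{B}$ be unital normed algebras (over $\mathbb{R}$ or $\mathbb{C}$), let $\mathcal{M}$ be a normed $(\mathcal{A},\mathcal{B})$-bimodule which is faithful as a left $\mathcal{A}$-module and as a right $\mathcal{B}$-module, and let $\mathcal{T}=Tri(\mathcal{A},\mathcal{M},\mathcal{B})$ be the associated unital triangular normed algebra, with identity $\mathbf{1}$ and center $Z(\mathcal{T})$. Let $n>1$ be an integer, let $\gamma$ be an invertible element of $Z(\mathcal{T})$, and let $\Psi,\Omega:\mathcal{T}\to\mathcal{T}$ be linear mappings with $\Omega(\mathbf{1})\in Z(\mathcal{T})$. Suppose that $\Psi$ and $\Omega$ satisfy one of the following: (i) $\Psi(X^n)=\gamma X^{n-1}\Omega(X)=\gamma\,\Omega(X)X^{n-1}$ for all $X\in\mathcal{T}$; (ii) $\Psi(X^n)=\gamma X\,\Omega(X^{n-1})=\gamma\,\Omega(X^{n-1})X$ for all $X\in\mathcal{T}$. Then $\Psi$ and $\Omega$ are both continuous.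
   Context: The triangular algebra $Tri(\mathcal{A},\mathcal{M},\mathcal{B})$ is the set of matrices $\begin{bmatrix} a & m\\ 0 & b\end{bmatrix}$ with $a\in\mathcal{A}$, $m\in\mathcal{M}$, $b\in\mathcal{B}$, under the usual matrix operations. When $\mathcal{A},\mathcal{B}$ are normed algebras and $\mathcal{M}$ is a normed bimodule, $\mathcal{T}$ is normed by $\left\|\begin{bmatrix} a & m\\ 0 & b\end{bmatrix}\right\|=\|a\|_{\mathcal{A}}+\|m\|_{\mathcal{M}}+\|b\|_{\mathcal{B}}$. Its center is $Z(\mathcal{T})=\{a\oplus b: a\in Z(\mathcal{A}),\ b\in Z(\mathcal{B}),\ am=mb \text{ for all } m\in\mathcal{M}\}$. *)

theory Defs
  imports "HOL-Analysis.Analysis"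
begin

definition normed_bimodule ::
  "('a::real_normed_algebra_1 \<Rightarrow> 'm::real_normed_vector \<Rightarrow> 'm) \<Rightarrow>
   ('m \<Rightarrow> 'b::real_normed_algebra_1 \<Rightarrow> 'm) \<Rightarrow> bool" where
  "normed_bimodule la rb \<longleftrightarrow>
     bilinear la \<and> bilinear rb \<and>
     (\<forall>a a' m. la (a * a') m = la a (la a' m)) \<and>
     (\<forall>m. la 1 m = m) \<and>
     (\<forall>b b' m. rb m (b * b') = rb (rb m b) b') \<and>
     (\<forall>m. rb m 1 = m) \<and>
     (\<forall>a m b. rb (la a m) b = la a (rb m b)) \<and>
     (\<forall>a m. norm (la a m) \<le> norm a * norm m) \<and>
     (\<forall>m b. norm (rb m b) \<le> norm m * norm b)"

definition faithful_left :: "('a::real_normed_algebra_1 \<Rightarrow> 'm::real_normed_vector \<Rightarrow> 'm) \<Rightarrow> bool" where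
  "faithful_left la \<longleftrightarrow> (\<forall>a. (\<forall>m. la a m = 0) \<longrightarrow> a = 0)"

definition faithful_right :: "('m::real_normed_vector \<Rightarrow> 'b::real_normed_algebra_1 \<Rightarrow> 'm) \<Rightarrow> bool" where
  "faithful_right rb \<longleftrightarrow> (\<forall>b. (\<forall>m. rb m b = 0) \<longrightarrow> b = 0)"

text \<open>Elements of Tri(A,M,B) are triples (a,m,b) representing [[a,m],[0,b]].\<close>

definition tri_mult ::
  "('a::real_normed_algebra_1 \<Rightarrow> 'm::real_normed_vector \<Rightarrow> 'm) \<Rightarrow>
   ('m \<Rightarrow> 'b::real_normed_algebra_1 \<Rightarrow> 'm) \<Rightarrow>
   'a \<times> 'm \<times> 'b \<Rightarrow> 'a \<times> 'm \<times> 'b \<Rightarrow> 'a \<times> 'm \<times> 'b" where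
  "tri_mult la rb X Y =
     (case X of (a, m, b) \<Rightarrow> case Y of (a', m', b') \<Rightarrow>
        (a * a', la a m' + rb m b', b * b'))"

definition tri_one :: "'a::real_normed_algebra_1 \<times> 'm::real_normed_vector \<times> 'b::real_normed_algebra_1" where
  "tri_one = (1, 0, 1)"

primrec tri_pow ::
  "('a::real_normed_algebra_1 \<Rightarrow> 'm::real_normed_vector \<Rightarrow> 'm) \<Rightarrow>
   ('m \<Rightarrow> 'b::real_normed_algebra_1 \<Rightarrow> 'm) \<Rightarrow>
   'a \<times> 'm \<times> 'b \<Rightarrow> nat \<Rightarrow> 'a \<times> 'm \<times> 'b" where
  "tri_pow la rb X 0 = tri_one"
| "tri_pow la rb X (Suc n) = tri_mult la rb X (tri_pow la rb X n)"

definition tri_center ::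
  "('a::real_normed_algebra_1 \<Rightarrow> 'm::real_normed_vector \<Rightarrow> 'm) \<Rightarrow>
   ('m \<Rightarrow> 'b::real_normed_algebra_1 \<Rightarrow> 'm) \<Rightarrow> ('a \<times> 'm \<times> 'b) set" where
  "tri_center la rb = {Z. \<forall>X. tri_mult la rb Z X = tri_mult la rb X Z}"

definition tri_invertible ::
  "('a::real_normed_algebra_1 \<Rightarrow> 'm::real_normed_vector \<Rightarrow> 'm) \<Rightarrow>
   ('m \<Rightarrow> 'b::real_normed_algebra_1 \<Rightarrow> 'm) \<Rightarrow> 'a \<times> 'm \<times> 'b \<Rightarrow> bool" where
  "tri_invertible la rb Z \<longleftrightarrow>
     (\<exists>W. tri_mult la rb Z W = tri_one \<and> tri_mult la rb W Z = tri_one)"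

definition tri_norm :: "'a::real_normed_algebra_1 \<times> 'm::real_normed_vector \<times> 'b::real_normed_algebra_1 \<Rightarrow> real" where
  "tri_norm X = (case X of (a, m, b) \<Rightarrow> norm a + norm m + norm b)"

definition tri_continuous ::
  "('a::real_normed_algebra_1 \<times> 'm::real_normed_vector \<times> 'b::real_normed_algebra_1 \<Rightarrow> 'a \<times> 'm \<times> 'b) \<Rightarrow> bool" where
  "tri_continuous f \<longleftrightarrow>
     (\<forall>X. \<forall>\<epsilon>>0. \<exists>\<delta>>0. \<forall>Y. tri_norm (Y - X) < \<delta> \<longrightarrow> tri_norm (f Y - f X) < \<epsilon>)"

end

theory Submission
  imports Defs
begin


lemma shift_comb:
  fixes b d :: "nat \<Rightarrow> 'v::real_vector"
  shows "(\<Sum>j\<le>m. t^j *\<^sub>R b j) + (\<Sum>j\<le>m. t^Suc j *\<^sub>R d j) =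
    (\<Sum>j\<le>Suc m. t^j *\<^sub>R ((if j \<le> m then b j else 0) + (if j = 0 then 0 else d (j - 1))))"
proof -
  have 1: "(\<Sum>j\<le>Suc m. t^j *\<^sub>R (if j \<le> m then b j else 0)) = (\<Sum>j\<le>m. t^j *\<^sub>R b j)"
    by (simp add: sum.atMost_Suc)
  have 2: "(\<Sum>j\<le>Suc m. t^j *\<^sub>R (if j = 0 then 0 else d (j - 1))) = (\<Sum>j\<le>m. t^Suc j *\<^sub>R d j)"
    by (simp only: sum.atMost_Suc_shift) (simp del: sum.atMost_Suc)
  show ?thesis unfolding scaleR_add_right sum.distrib 1 2 by (rule refl)
qed

lemma poly_zero:
  fixes a :: "nat \<Rightarrow> 'v::real_normed_vector"
  assumes "\<forall>t::real. (\<Sum>j\<le>N. t^j *\<^sub>R a j) = 0" and "j \<le> N"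
  shows "a j = 0"
  using assms
proof (induction N arbitrary: a j)
  case 0
  then show ?case by simp
next
  case (Suc N)
  have sh: "(\<Sum>j\<le>Suc N. t^j *\<^sub>R a j) = a 0 + t *\<^sub>R (\<Sum>i\<le>N. t^i *\<^sub>R a (Suc i))" for t :: real
    by (subst sum.atMost_Suc_shift) (simp add: scaleR_sum_right del: sum.atMost_Suc)
  define q where "q t = (\<Sum>i\<le>N. t^i *\<^sub>R a (Suc i))" for t :: real
  have a0: "a 0 = 0" using Suc.prems(1) sh[of 0] by (simp del: sum.atMost_Suc)
  have qnz: "q t = 0" if "t \<noteq> 0" for t
    using Suc.prems(1) sh[of t] a0 that by (simp add: q_def del: sum.atMost_Suc)
  have cq: "continuous_on UNIV q" unfolding q_def by (intro continuous_intros)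
  have l1: "(q \<longlongrightarrow> q 0) (at 0)"
    using cq by (simp add: continuous_on_def)
  have l2: "(q \<longlongrightarrow> 0) (at 0)"
    by (rule tendsto_eventually) (auto simp: eventually_at intro!: exI[of _ 1] qnz)
  have "q 0 = 0" using tendsto_unique[OF _ l1 l2] by simp
  then have qz: "\<forall>t. q t = 0" using qnz by metis
  show ?case
  proof (cases j)
    case 0 then show ?thesis using a0 by simp
  next
    case (Suc i)
    have "(\<lambda>i. a (Suc i)) i = 0"
      by (rule Suc.IH) (use qz Suc Suc.prems(2) in \<open>auto simp: q_def\<close>)
    then show ?thesis using Suc by simp
  qed
qed

lemma poly_eq:
  fixes a b :: "nat \<Rightarrow> 'v::real_normed_vector"
  assumes "\<forall>t::real. (\<Sum>j\<le>N. t^j *\<^sub>R a j) = (\<Sum>j\<le>N. t^j *\<^sub>R b j)" and "j \<le> N"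
  shows "a j = b j"
proof -
  have "\<forall>t::real. (\<Sum>j\<le>N. t^j *\<^sub>R (a j - b j)) = 0"
    using assms(1) by (simp add: scaleR_diff_right sum_subtractf)
  from poly_zero[OF this assms(2)] show ?thesis by simp
qed

lemma cmb_eq:
  fixes a b d :: "nat \<Rightarrow> 'v::real_normed_vector"
  assumes "\<forall>t::real. (\<Sum>j\<le>Suc m. t^j *\<^sub>R a j) = (\<Sum>j\<le>m. t^j *\<^sub>R b j) + (\<Sum>j\<le>m. t^Suc j *\<^sub>R d j)"
    and "j \<le> Suc m"
  shows "a j = (if j \<le> m then b j else 0) + (if j = 0 then 0 else d (j - 1))"
proof -
  have "\<forall>t::real. (\<Sum>j\<le>Suc m. t^j *\<^sub>R a j) = (\<Sum>j\<le>Suc m. t^j *\<^sub>R ((if j \<le> m then b j else 0) + (if j = 0 then 0 else d (j - 1))))"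
    using assms(1) unfolding shift_comb .
  from poly_eq[OF this assms(2)] show ?thesis by simp
qed

lemma coeff12:
  fixes a b d :: "nat \<Rightarrow> 'v::real_normed_vector"
  assumes "\<forall>t::real. (\<Sum>j\<le>Suc m. t^j *\<^sub>R a j) = (\<Sum>j\<le>m. t^j *\<^sub>R b j) + (\<Sum>j\<le>m. t^Suc j *\<^sub>R d j)"
    and "m \<ge> 1" and "b (Suc m) = 0"
  shows "a 1 = b 1 + d 0" and "a 2 = b 2 + d 1"
proof -
  show "a 1 = b 1 + d 0" using cmb_eq[OF assms(1), of 1] assms(2) by simp
  have "a 2 = (if 2 \<le> m then b 2 else 0) + d 1" using cmb_eq[OF assms(1), of 2] assms(2) by simp
  moreover have "\<not> 2 \<le> m \<Longrightarrow> b 2 = 0" using assms(2,3) by (metis Suc_1 le_antisym not_less_eq_eq)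
  ultimately show "a 2 = b 2 + d 1" by (cases "2 \<le> m") auto
qed

lemma coeff2c:
  fixes b d b' d' :: "nat \<Rightarrow> 'v::real_normed_vector"
  assumes "\<forall>t::real. (\<Sum>j\<le>m. t^j *\<^sub>R b j) + (\<Sum>j\<le>m. t^Suc j *\<^sub>R d j) = (\<Sum>j\<le>m. t^j *\<^sub>R b' j) + (\<Sum>j\<le>m. t^Suc j *\<^sub>R d' j)"
    and "m \<ge> 1" and "b (Suc m) = 0" and "b' (Suc m) = 0"
  shows "b 2 + d 1 = b' 2 + d' 1"
proof -
  let ?a = "\<lambda>j. (if j \<le> m then b j else 0) + (if j = 0 then 0 else d (j - 1))"
  have "\<forall>t::real. (\<Sum>j\<le>Suc m. t^j *\<^sub>R ?a j) = (\<Sum>j\<le>m. t^j *\<^sub>R b' j) + (\<Sum>j\<le>m. t^Suc j *\<^sub>R d' j)"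
    using assms(1) unfolding shift_comb by simp
  from coeff12(2)[OF this assms(2,4)] have "?a 2 = b' 2 + d' 1" .
  moreover have "\<not> 2 \<le> m \<Longrightarrow> b 2 = 0" using assms(2,3) by (metis Suc_1 le_antisym not_less_eq_eq)
  ultimately show ?thesis by (cases "2 \<le> m") auto
qed

lemma real_choose2: "real (k choose 2) = real k * (real k - 1) / 2"
proof (induction k)
  case 0 then show ?case by simp
next
  case (Suc k)
  have "Suc k choose 2 = k + (k choose 2)" by (simp add: numeral_2_eq_2)
  then show ?case using Suc by (simp add: field_simps)
qed

locale trialg =
  fixes la :: "'a::real_normed_algebra_1 \<Rightarrow> 'm::real_normed_vector \<Rightarrow> 'm"
    and rb :: "'m \<Rightarrow> 'b::real_normed_algebra_1 \<Rightarrow> 'm"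
  assumes nb: "normed_bimodule la rb"
begin

lemma bl: "bilinear la" and br: "bilinear rb"
  and la_mult: "la (a * a') m = la a (la a' m)" and la_one[simp]: "la 1 m = m"
  and rb_mult: "rb m (b * b') = rb (rb m b) b'" and rb_one[simp]: "rb m 1 = m"
  and lr: "rb (la a m) b = la a (rb m b)"
  and la_norm: "norm (la a m) \<le> norm a * norm m"
  and rb_norm: "norm (rb m b) \<le> norm m * norm b"
  using nb unfolding normed_bimodule_def by auto

lemma la_simps[simp]: "la (x + y) m = la x m + la y m" "la a (m + m') = la a m + la a m'"
  "la (r *\<^sub>R x) m = r *\<^sub>R la x m" "la a (r *\<^sub>R m) = r *\<^sub>R la a m"
  "la 0 m = 0" "la a 0 = 0" "la (x - y) m = la x m - la y m" "la a (m - m') = la a m - la a m'"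
  "la (- x) m = - la x m" "la a (- m) = - la a m"
  using bl by (simp_all add: bilinear_ladd bilinear_radd bilinear_lmul bilinear_rmul
     bilinear_lzero bilinear_rzero bilinear_lsub bilinear_rsub bilinear_lneg bilinear_rneg)

lemma rb_simps[simp]: "rb (x + y) b = rb x b + rb y b" "rb m (b + b') = rb m b + rb m b'"
  "rb (r *\<^sub>R x) b = r *\<^sub>R rb x b" "rb m (r *\<^sub>R b) = r *\<^sub>R rb m b"
  "rb 0 b = 0" "rb m 0 = 0" "rb (x - y) b = rb x b - rb y b" "rb m (b - b') = rb m b - rb m b'"
  "rb (- x) b = - rb x b" "rb m (- b) = - rb m b"
  using br by (simp_all add: bilinear_ladd bilinear_radd bilinear_lmul bilinear_rmul
     bilinear_lzero bilinear_rzero bilinear_lsub bilinear_rsub bilinear_lneg bilinear_rneg)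

abbreviation mul (infixl "\<odot>" 70) where "mul \<equiv> tri_mult la rb"

lemma mul_tr[simp]: "(a, m, b) \<odot> (a', m', b') = (a * a', la a m' + rb m b', b * b')"
  by (simp add: tri_mult_def)

lemma mul_add_left: "(X + Y) \<odot> Z = X \<odot> Z + Y \<odot> Z"
  by (cases X; cases Y; cases Z) (auto simp: algebra_simps)
lemma mul_add_right: "Z \<odot> (X + Y) = Z \<odot> X + Z \<odot> Y"
  by (cases X; cases Y; cases Z) (auto simp: algebra_simps)
lemma mul_diff_left: "(X - Y) \<odot> Z = X \<odot> Z - Y \<odot> Z"
  by (cases X; cases Y; cases Z) (auto simp: algebra_simps)
lemma mul_diff_right: "Z \<odot> (X - Y) = Z \<odot> X - Z \<odot> Y"
  by (cases X; cases Y; cases Z) (auto simp: algebra_simps)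
lemma mul_scale_left: "(r *\<^sub>R X) \<odot> Z = r *\<^sub>R (X \<odot> Z)"
  by (cases X; cases Z) (auto simp: algebra_simps)
lemma mul_scale_right: "Z \<odot> (r *\<^sub>R X) = r *\<^sub>R (Z \<odot> X)"
  by (cases X; cases Z) (auto simp: algebra_simps)
lemma mul_zero_left: "0 \<odot> Z = 0"
  by (cases Z) (auto simp: zero_prod_def)
lemma mul_zero_right: "Z \<odot> 0 = 0"
  by (cases Z) (auto simp: zero_prod_def)
lemmas mul_lin = mul_add_left mul_add_right mul_diff_left mul_diff_right mul_scale_left mul_scale_right
  mul_zero_left mul_zero_right

lemma mul_assoc: "(X \<odot> Y) \<odot> Z = X \<odot> (Y \<odot> Z)"
  by (cases X; cases Y; cases Z) (auto simp: algebra_simps la_mult rb_mult lr)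

lemma one_mul[simp]: "tri_one \<odot> X = X" and mul_one[simp]: "X \<odot> tri_one = X"
  by (cases X; simp add: tri_one_def)+

lemma mul_sum_right: "Z \<odot> (\<Sum>j\<in>S. f j) = (\<Sum>j\<in>S. Z \<odot> f j)"
  by (induction S rule: infinite_finite_induct) (auto simp: mul_lin)
lemma mul_sum_left: "(\<Sum>j\<in>S. f j) \<odot> Z = (\<Sum>j\<in>S. f j \<odot> Z)"
  by (induction S rule: infinite_finite_induct) (auto simp: mul_lin)

abbreviation pw where "pw X k \<equiv> tri_pow la rb X k"

lemma pw_0[simp]: "pw X 0 = tri_one" and pw_1[simp]: "pw X 1 = X" and pw_2: "pw X 2 = X \<odot> X"
  by (simp_all add: numeral_2_eq_2)

lemma pw_Suc0[simp]: "pw X (Suc 0) = X" by simp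

lemma pw_comm: "X \<odot> pw X k = pw X k \<odot> X"
  by (induction k) (simp_all, metis mul_assoc)


lemma binom: "pw (tri_one + t *\<^sub>R U) k = (\<Sum>j\<le>k. t^j *\<^sub>R (real (k choose j) *\<^sub>R pw U j))"
proof (induction k)
  case 0 show ?case by simp
next
  case (Suc k)
  let ?b = "\<lambda>j. real (k choose j) *\<^sub>R pw U j"
  let ?d = "\<lambda>j. real (k choose j) *\<^sub>R pw U (Suc j)"
  have "pw (tri_one + t *\<^sub>R U) (Suc k) = (tri_one + t *\<^sub>R U) \<odot> (\<Sum>j\<le>k. t^j *\<^sub>R ?b j)"
    using Suc by simp
  also have "\<dots> = (\<Sum>j\<le>k. t^j *\<^sub>R ?b j) + (\<Sum>j\<le>k. t^Suc j *\<^sub>R ?d j)"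
    by (simp add: mul_add_left mul_scale_left mul_sum_right mul_scale_right scaleR_sum_right scaleR_add_right sum.distrib mult_ac del: sum.atMost_Suc)
  also have "\<dots> = (\<Sum>j\<le>Suc k. t^j *\<^sub>R ((if j \<le> k then ?b j else 0) + (if j = 0 then 0 else ?d (j - 1))))"
    by (rule shift_comb)
  also have "\<dots> = (\<Sum>j\<le>Suc k. t^j *\<^sub>R (real (Suc k choose j) *\<^sub>R pw U j))"
  proof (rule sum.cong[OF refl])
    fix j assume "j \<in> {..Suc k}"
    then show "t^j *\<^sub>R ((if j \<le> k then ?b j else 0) + (if j = 0 then 0 else ?d (j - 1))) =
       t^j *\<^sub>R (real (Suc k choose j) *\<^sub>R pw U j)"
      by (cases j) (auto simp: scaleR_add_left binomial_eq_0 simp del: tri_pow.simps)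
  qed
  finally show ?case .
qed

lemma omega_form:
  fixes \<Omega> :: "'a \<times> 'm \<times> 'b \<Rightarrow> 'a \<times> 'm \<times> 'b"
  assumes lin: "linear \<Omega>" and cc: "\<forall>X. c \<odot> X = X \<odot> c" and c1: "\<Omega> tri_one = c"
    and K2: "\<forall>U. \<Omega> (U \<odot> U) + (U \<odot> U) \<odot> c = 2 *\<^sub>R (U \<odot> \<Omega> U)"
    and K3: "\<forall>U. U \<odot> \<Omega> U = \<Omega> U \<odot> U"
    and fl: "faithful_left la" and fr: "faithful_right rb"
  shows "\<Omega> V = V \<odot> c"
proof -
  define D where "D U = \<Omega> U - U \<odot> c" for U
  have Dadd: "D (X + Y) = D X + D Y" for X Y
    by (simp add: D_def linear_add[OF lin] mul_add_left algebra_simps)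
  have Ddiff: "D (X - Y) = D X - D Y" for X Y
    by (simp add: D_def linear_diff[OF lin] mul_diff_left algebra_simps)
  have Dscale: "D (r *\<^sub>R X) = r *\<^sub>R D X" for r X
    by (simp add: D_def linear_scale[OF lin] mul_scale_left algebra_simps)
  have D1: "D tri_one = 0" by (simp add: D_def c1)
  have D2: "D (U \<odot> U) = 2 *\<^sub>R (U \<odot> D U)" for U
  proof -
    have "\<Omega> (U \<odot> U) = 2 *\<^sub>R (U \<odot> \<Omega> U) - (U \<odot> U) \<odot> c"
      using K2[rule_format, of U] by (simp add: eq_diff_eq del: mul_tr)
    then show ?thesis by (simp add: D_def mul_diff_right mul_assoc scaleR_diff_right scaleR_2)
  qed
  have D3: "U \<odot> D U = D U \<odot> U" for U
  proof -
    have "(U \<odot> c) \<odot> U = U \<odot> (U \<odot> c)" using cc[rule_format, of U] by (simp add: mul_assoc del: mul_tr)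
    then show ?thesis using K3[rule_format, of U] by (simp add: D_def mul_diff_right mul_diff_left del: mul_tr)
  qed
  have Dpol: "D (X \<odot> Y + Y \<odot> X) = 2 *\<^sub>R (X \<odot> D Y) + 2 *\<^sub>R (Y \<odot> D X)" for X Y
  proof -
    have e: "(X + Y) \<odot> (X + Y) = X \<odot> X + (X \<odot> Y + Y \<odot> X) + Y \<odot> Y"
      by (simp add: mul_add_left mul_add_right algebra_simps)
    have "D ((X + Y) \<odot> (X + Y)) = D (X \<odot> X) + D (X \<odot> Y + Y \<odot> X) + D (Y \<odot> Y)"
      unfolding e Dadd ..
    moreover have "D ((X + Y) \<odot> (X + Y)) = 2 *\<^sub>R (X \<odot> D X) + 2 *\<^sub>R (X \<odot> D Y) + 2 *\<^sub>R (Y \<odot> D X) + 2 *\<^sub>R (Y \<odot> D Y)"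
      unfolding D2 Dadd by (simp add: mul_add_left mul_add_right scaleR_add_right)
    ultimately show ?thesis unfolding D2 by (simp add: algebra_simps)
  qed
  have Didem: "D E = 0" if "E \<odot> E = E" for E
  proof -
    have a: "D E = 2 *\<^sub>R (E \<odot> D E)" using D2[of E] that by simp
    have "E \<odot> D E = E \<odot> (2 *\<^sub>R (E \<odot> D E))" using arg_cong[OF a, of "\<lambda>Z. E \<odot> Z"] .
    also have "\<dots> = 2 *\<^sub>R ((E \<odot> E) \<odot> D E)" by (simp only: mul_scale_right mul_assoc)
    also have "\<dots> = 2 *\<^sub>R (E \<odot> D E)" by (simp only: that)
    finally have "E \<odot> D E = 2 *\<^sub>R (E \<odot> D E)" .
    then have "E \<odot> D E = 0" by (simp add: scaleR_2)
    then show ?thesis using a by simp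
  qed
  have DP: "D (1, 0, 0) = 0" by (rule Didem) simp
  have DQ: "D (0, 0, 1) = 0" by (rule Didem) simp
  have DN: "D (0, m, 0) = 0" for m
  proof -
    have "D (1, m, 0) = 0" by (rule Didem) simp
    moreover have "(0::'a, m, 0::'b) = (1, m, 0) - (1, 0, 0)" by simp
    ultimately show ?thesis using DP Ddiff[of "(1,m,0)" "(1,0,0)"] by simp
  qed
  have DA: "D (a, 0, 0) = 0" for a
  proof -
    obtain x y z where xyz: "D (a, 0, 0) = (x, y, z)" by (cases "D (a, 0, 0)") auto
    have e: "(1, 0, 0) \<odot> (a, 0, 0) + (a, 0, 0) \<odot> (1, 0, 0) = 2 *\<^sub>R (a, 0::'m, 0::'b)"
      by (simp add: scaleR_2)
    have "2 *\<^sub>R D (a, 0, 0) = 2 *\<^sub>R ((1, 0, 0) \<odot> D (a, 0, 0))"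
      using Dpol[of "(1,0,0)" "(a,0,0)"] unfolding e Dscale DP
      by (simp only: mul_zero_right scaleR_zero_right add_0_right)
    then have "D (a, 0, 0) = (1, 0, 0) \<odot> D (a, 0, 0)" by simp
    then have z: "z = 0" using xyz by simp
    have "la a y = 0" using D3[of "(a,0,0)"] xyz z by simp
    moreover have "la (1 + a) y = 0"
    proof -
      have "D (1 + a, 0, 0) = (x, y, z)" using Dadd[of "(1,0,0)" "(a,0,0)"] DP xyz by simp
      then show ?thesis using D3[of "(1 + a,0,0)"] z by simp
    qed
    ultimately have y: "y = 0" by (simp add: la_simps(1))
    have "la x m = 0" for m
    proof -
      have "D (a, m, 0) = (x, 0, 0)" using Dadd[of "(a,0,0)" "(0,m,0)"] DN xyz y z by simp
      then show ?thesis using D3[of "(a,m,0)"] by simp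
    qed
    then have "x = 0" using fl unfolding faithful_left_def by blast
    then show ?thesis using xyz y z by (simp add: zero_prod_def)
  qed
  have DB: "D (0, 0, b) = 0" for b
  proof -
    obtain x y z where xyz: "D (0, 0, b) = (x, y, z)" by (cases "D (0, 0, b)") auto
    have e: "(0, 0, 1) \<odot> (0, 0, b) + (0, 0, b) \<odot> (0, 0, 1) = 2 *\<^sub>R (0::'a, 0::'m, b)"
      by (simp add: scaleR_2)
    have "2 *\<^sub>R D (0, 0, b) = 2 *\<^sub>R ((0, 0, 1) \<odot> D (0, 0, b))"
      using Dpol[of "(0,0,1)" "(0,0,b)"] unfolding e Dscale DQ
      by (simp only: mul_zero_right scaleR_zero_right add_0_right)
    then have "D (0, 0, b) = (0, 0, 1) \<odot> D (0, 0, b)" by simp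
    then have xy: "x = 0" "y = 0" using xyz by simp_all
    have "rb m z = 0" for m
    proof -
      have "D (0, m, b) = (0, 0, z)" using Dadd[of "(0,m,0)" "(0,0,b)"] DN xyz xy by simp
      then show ?thesis using D3[of "(0,m,b)"] by simp
    qed
    then have "z = 0" using fr unfolding faithful_right_def by blast
    then show ?thesis using xyz xy by (simp add: zero_prod_def)
  qed
  obtain a m b where V: "V = (a, m, b)" by (cases V) auto
  have "V = (a, 0, 0) + (0, m, 0) + (0, 0, b)" using V by simp
  then have "D V = D (a, 0, 0) + D (0, m, 0) + D (0, 0, b)" by (simp only: Dadd)
  then have "D V = 0" using DA DB DN by simp
  then show ?thesis by (simp add: D_def)
qed

end


lemma alg_i:
  fixes P G1 G2 G3 :: "'v::real_vector"
  assumes m: "m \<ge> (1::nat)"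
    and h1: "real (Suc m) *\<^sub>R P = real m *\<^sub>R G1 + G3"
    and h2: "(real (Suc m) * (real (Suc m) - 1) / 2) *\<^sub>R P = (real m * (real m - 1) / 2) *\<^sub>R G1 + real m *\<^sub>R G2"
  shows "G3 + G1 = 2 *\<^sub>R G2"
proof -
  have mz: "real m \<noteq> 0" using m by simp
  have hh: "(2 / real m) *\<^sub>R ((real (Suc m) * (real (Suc m) - 1) / 2) *\<^sub>R P) = (2 / real m) *\<^sub>R ((real m * (real m - 1) / 2) *\<^sub>R G1 + real m *\<^sub>R G2)"
    using h2 by simp
  have c1: "(2 / real m) * (real (Suc m) * (real (Suc m) - 1) / 2) = real (Suc m)"
    using mz by (simp add: field_simps)
  have c2: "(2 / real m) * (real m * (real m - 1) / 2) = real m - 1"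
    using mz by (simp add: field_simps)
  have c3: "(2 / real m) * real m = 2"
    using mz by (simp add: field_simps)
  have "real (Suc m) *\<^sub>R P = (real m - 1) *\<^sub>R G1 + 2 *\<^sub>R G2"
    using hh unfolding scaleR_add_right scaleR_scaleR c1 c2 c3 .
  with h1 have "real m *\<^sub>R G1 + G3 = (real m - 1) *\<^sub>R G1 + 2 *\<^sub>R G2" by simp
  then show ?thesis by (simp add: algebra_simps)
qed

lemma (in trialg) tri_norm_mul: "tri_norm (X \<odot> Y) \<le> tri_norm X * tri_norm Y"
proof -
  obtain a m b where X: "X = (a, m, b)" by (cases X) auto
  obtain a' m' b' where Y: "Y = (a', m', b')" by (cases Y) auto
  have 1: "norm (a * a') \<le> norm a * norm a'" by (rule norm_mult_ineq)
  have 2: "norm (la a m' + rb m b') \<le> norm a * norm m' + norm m * norm b'"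
    by (rule order_trans[OF norm_triangle_ineq add_mono[OF la_norm rb_norm]])
  have 3: "norm (b * b') \<le> norm b * norm b'" by (rule norm_mult_ineq)
  have 4: "0 \<le> norm a * norm b' + norm m * norm a' + norm m * norm m' + norm b * norm a' + norm b * norm m'"
    by (intro add_nonneg_nonneg mult_nonneg_nonneg norm_ge_zero)
  have 5: "(norm a + norm m + norm b) * (norm a' + norm m' + norm b') = norm a * norm a' + norm a * norm m' + norm a * norm b' + norm m * norm a' + norm m * norm m' + norm m * norm b' + norm b * norm a' + norm b * norm m' + norm b * norm b'"
    by (simp add: algebra_simps)
  have 6: "tri_norm (X \<odot> Y) = norm (a * a') + norm (la a m' + rb m b') + norm (b * b')"
    by (simp add: X Y tri_norm_def)
  have 7: "tri_norm X * tri_norm Y = (norm a + norm m + norm b) * (norm a' + norm m' + norm b')"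
    by (simp add: X Y tri_norm_def)
  show ?thesis unfolding 6 7 5 using 1 2 3 4 by linarith
qed

lemma tri_norm_nonneg: "0 \<le> tri_norm X"
  by (cases X) (auto simp: tri_norm_def)

lemma tri_cont_lip:
  assumes "\<And>X Y. tri_norm (f Y - f X) \<le> K * tri_norm (Y - X)" and "K \<ge> 0"
  shows "tri_continuous f"
  unfolding tri_continuous_def
proof (intro allI impI)
  fix X and \<epsilon> :: real assume e: "\<epsilon> > 0"
  show "\<exists>\<delta>>0. \<forall>Y. tri_norm (Y - X) < \<delta> \<longrightarrow> tri_norm (f Y - f X) < \<epsilon>"
  proof (intro exI[of _ "\<epsilon> / (K + 1)"] conjI allI impI)
    show "\<epsilon> / (K + 1) > 0" using e assms(2) by simp
    fix Y assume "tri_norm (Y - X) < \<epsilon> / (K + 1)"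
    then have "(K + 1) * tri_norm (Y - X) < \<epsilon>" using assms(2) by (simp add: field_simps)
    moreover have "K * tri_norm (Y - X) \<le> (K + 1) * tri_norm (Y - X)"
      using tri_norm_nonneg[of "Y - X"] by (simp add: algebra_simps)
    ultimately show "tri_norm (f Y - f X) < \<epsilon>" using assms(1)[of Y X] by linarith
  qed
qed



theorem corollary2p3:
  fixes la :: "'a::real_normed_algebra_1 \<Rightarrow> 'm::real_normed_vector \<Rightarrow> 'm"
    and rb :: "'m \<Rightarrow> 'b::real_normed_algebra_1 \<Rightarrow> 'm"
    and \<Psi> \<Omega> :: "'a \<times> 'm \<times> 'b \<Rightarrow> 'a \<times> 'm \<times> 'b"
    and \<gamma> :: "'a \<times> 'm \<times> 'b"
    and n :: nat
  assumes "normed_bimodule la rb"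
    and "faithful_left la"
    and "faithful_right rb"
    and "n > 1"
    and "\<gamma> \<in> tri_center la rb"
    and "tri_invertible la rb \<gamma>"
    and "linear \<Psi>"
    and "linear \<Omega>"
    and "\<Omega> tri_one \<in> tri_center la rb"
    and "(\<forall>X. \<Psi> (tri_pow la rb X n) = tri_mult la rb \<gamma> (tri_mult la rb (tri_pow la rb X (n - 1)) (\<Omega> X))
              \<and> tri_mult la rb \<gamma> (tri_mult la rb (tri_pow la rb X (n - 1)) (\<Omega> X))
                  = tri_mult la rb \<gamma> (tri_mult la rb (\<Omega> X) (tri_pow la rb X (n - 1))))
       \<or> (\<forall>X. \<Psi> (tri_pow la rb X n) = tri_mult la rb \<gamma> (tri_mult la rb X (\<Omega> (tri_pow la rb X (n - 1))))
              \<and> tri_mult la rb \<gamma> (tri_mult la rb X (\<Omega> (tri_pow la rb X (n - 1))))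
                  = tri_mult la rb \<gamma> (tri_mult la rb (\<Omega> (tri_pow la rb X (n - 1))) X))"
  shows "tri_continuous \<Psi> \<and> tri_continuous \<Omega>"
proof -
  interpret trialg la rb by unfold_locales (rule assms(1))
  define c where "c = \<Omega> tri_one"
  have cc: "\<forall>X. c \<odot> X = X \<odot> c" using assms(9) by (simp add: tri_center_def c_def del: mul_tr)
  obtain W where W: "W \<odot> \<gamma> = tri_one" using assms(6) unfolding tri_invertible_def by blast
  have canc: "Z1 = Z2" if "\<gamma> \<odot> Z1 = \<gamma> \<odot> Z2" for Z1 Z2
  proof -
    have "W \<odot> (\<gamma> \<odot> Z1) = W \<odot> (\<gamma> \<odot> Z2)" using that by simp
    then show ?thesis by (simp add: W flip: mul_assoc del: mul_tr)
  qed
  obtain m where n: "n = Suc m" and m1: "m \<ge> 1" using assms(4) by (cases n) auto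
  have nm: "n - 1 = m" using n by simp
  have linP: "linear \<Psi>" and linO: "linear \<Omega>" using assms(7,8) .
  define Xt where "Xt t U = (tri_one::'a \<times> 'm \<times> 'b) + t *\<^sub>R U" for t :: real and U
  have OX: "\<Omega> (Xt t U) = c + t *\<^sub>R \<Omega> U" for t U
    by (simp add: Xt_def c_def linear_add[OF linO] linear_scale[OF linO] del: mul_tr)
  have pwX: "pw (Xt t U) k = (\<Sum>j\<le>k. t^j *\<^sub>R (real (k choose j) *\<^sub>R pw U j))" for t U k
    by (simp add: Xt_def binom del: tri_pow.simps)
  have PsiX: "\<Psi> (pw (Xt t U) n) = (\<Sum>j\<le>Suc m. t^j *\<^sub>R (real (Suc m choose j) *\<^sub>R \<Psi> (pw U j)))" for t U
    unfolding pwX n by (simp add: linear_sum[OF linP] linear_scale[OF linP] del: tri_pow.simps sum.atMost_Suc mul_tr)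
  have OpwX: "\<Omega> (pw (Xt t U) m) = (\<Sum>j\<le>m. t^j *\<^sub>R (real (m choose j) *\<^sub>R \<Omega> (pw U j)))" for t U
    unfolding pwX by (simp add: linear_sum[OF linO] linear_scale[OF linO] del: tri_pow.simps sum.atMost_Suc mul_tr)
  have main: "(\<forall>U. \<Omega> U = U \<odot> c \<longrightarrow> real n *\<^sub>R \<Psi> U = real n *\<^sub>R (\<gamma> \<odot> (U \<odot> c))) \<and>
     (\<forall>U. \<Omega> (U \<odot> U) + (U \<odot> U) \<odot> c = 2 *\<^sub>R (U \<odot> \<Omega> U)) \<and> (\<forall>U. U \<odot> \<Omega> U = \<Omega> U \<odot> U)"
    using assms(10)
  proof (elim disjE)
    assume H: "\<forall>X. \<Psi> (pw X n) = \<gamma> \<odot> (pw X (n - 1) \<odot> \<Omega> X) \<and>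
       \<gamma> \<odot> (pw X (n - 1) \<odot> \<Omega> X) = \<gamma> \<odot> (\<Omega> X \<odot> pw X (n - 1))"
    have KE: "real (Suc m) *\<^sub>R \<Psi> U = real m *\<^sub>R (\<gamma> \<odot> (U \<odot> c)) + \<gamma> \<odot> \<Omega> U \<and>
      (real (Suc m) * (real (Suc m) - 1) / 2) *\<^sub>R \<Psi> (U \<odot> U) =
        (real m * (real m - 1) / 2) *\<^sub>R (\<gamma> \<odot> ((U \<odot> U) \<odot> c)) + real m *\<^sub>R (\<gamma> \<odot> (U \<odot> \<Omega> U))" for U
    proof -
      have co: "\<forall>t::real. (\<Sum>j\<le>Suc m. t^j *\<^sub>R (real (Suc m choose j) *\<^sub>R \<Psi> (pw U j))) =
        (\<Sum>j\<le>m. t^j *\<^sub>R (real (m choose j) *\<^sub>R (\<gamma> \<odot> (pw U j \<odot> c)))) +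
        (\<Sum>j\<le>m. t^Suc j *\<^sub>R (real (m choose j) *\<^sub>R (\<gamma> \<odot> (pw U j \<odot> \<Omega> U))))"
      proof
        fix t :: real
        have "(\<Sum>j\<le>Suc m. t^j *\<^sub>R (real (Suc m choose j) *\<^sub>R \<Psi> (pw U j))) = \<Psi> (pw (Xt t U) n)"
          by (rule PsiX[symmetric])
        also have "\<dots> = \<gamma> \<odot> (pw (Xt t U) (n - 1) \<odot> \<Omega> (Xt t U))" using H by blast
        also have "\<dots> = (\<Sum>j\<le>m. t^j *\<^sub>R (real (m choose j) *\<^sub>R (\<gamma> \<odot> (pw U j \<odot> c)))) +
          (\<Sum>j\<le>m. t^Suc j *\<^sub>R (real (m choose j) *\<^sub>R (\<gamma> \<odot> (pw U j \<odot> \<Omega> U))))"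
          unfolding nm pwX OX
          by (simp add: mul_sum_left mul_sum_right mul_add_right mul_scale_left mul_scale_right
              scaleR_sum_right sum.distrib mult_ac del: mul_tr tri_pow.simps sum.atMost_Suc)
        finally show "(\<Sum>j\<le>Suc m. t^j *\<^sub>R (real (Suc m choose j) *\<^sub>R \<Psi> (pw U j))) =
        (\<Sum>j\<le>m. t^j *\<^sub>R (real (m choose j) *\<^sub>R (\<gamma> \<odot> (pw U j \<odot> c)))) +
        (\<Sum>j\<le>m. t^Suc j *\<^sub>R (real (m choose j) *\<^sub>R (\<gamma> \<odot> (pw U j \<odot> \<Omega> U))))" .
      qed
      have z: "real (m choose Suc m) *\<^sub>R (\<gamma> \<odot> (pw U (Suc m) \<odot> c)) = 0" by simp
      note a = coeff12[OF co m1 z]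
      show ?thesis using a real_choose2[of "Suc m"] real_choose2[of m]
        by (simp add: pw_2 del: mul_tr tri_pow.simps)
    qed
    have K3: "U \<odot> \<Omega> U = \<Omega> U \<odot> U" for U
    proof -
      have co: "\<forall>t::real. (\<Sum>j\<le>m. t^j *\<^sub>R (real (m choose j) *\<^sub>R (pw U j \<odot> c))) +
          (\<Sum>j\<le>m. t^Suc j *\<^sub>R (real (m choose j) *\<^sub>R (pw U j \<odot> \<Omega> U))) =
        (\<Sum>j\<le>m. t^j *\<^sub>R (real (m choose j) *\<^sub>R (c \<odot> pw U j))) +
          (\<Sum>j\<le>m. t^Suc j *\<^sub>R (real (m choose j) *\<^sub>R (\<Omega> U \<odot> pw U j)))"
      proof
        fix t :: real
        have "pw (Xt t U) (n - 1) \<odot> \<Omega> (Xt t U) = \<Omega> (Xt t U) \<odot> pw (Xt t U) (n - 1)"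
          using H canc by blast
        then show "(\<Sum>j\<le>m. t^j *\<^sub>R (real (m choose j) *\<^sub>R (pw U j \<odot> c))) +
          (\<Sum>j\<le>m. t^Suc j *\<^sub>R (real (m choose j) *\<^sub>R (pw U j \<odot> \<Omega> U))) =
        (\<Sum>j\<le>m. t^j *\<^sub>R (real (m choose j) *\<^sub>R (c \<odot> pw U j))) +
          (\<Sum>j\<le>m. t^Suc j *\<^sub>R (real (m choose j) *\<^sub>R (\<Omega> U \<odot> pw U j)))"
          unfolding nm pwX OX
          by (simp add: mul_sum_left mul_sum_right mul_add_right mul_add_left mul_scale_left mul_scale_right
              scaleR_sum_right scaleR_add_right sum.distrib mult_ac del: mul_tr tri_pow.simps sum.atMost_Suc)
      qed
      have "real (m choose 2) *\<^sub>R (pw U 2 \<odot> c) + real (m choose 1) *\<^sub>R (pw U 1 \<odot> \<Omega> U) =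
            real (m choose 2) *\<^sub>R (c \<odot> pw U 2) + real (m choose 1) *\<^sub>R (\<Omega> U \<odot> pw U 1)"
        using coeff2c[OF co m1] by simp
      then have "real m *\<^sub>R (U \<odot> \<Omega> U) = real m *\<^sub>R (\<Omega> U \<odot> U)"
        using cc by (simp del: mul_tr tri_pow.simps)
      then show ?thesis using m1 by simp
    qed
    have K2: "\<Omega> (U \<odot> U) + (U \<odot> U) \<odot> c = 2 *\<^sub>R (U \<odot> \<Omega> U)" for U
    proof -
      have "\<gamma> \<odot> \<Omega> (U \<odot> U) + \<gamma> \<odot> ((U \<odot> U) \<odot> c) = 2 *\<^sub>R (\<gamma> \<odot> (U \<odot> \<Omega> U))"
        using alg_i[OF m1 KE[of "U \<odot> U", THEN conjunct1] KE[of U, THEN conjunct2]] .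
      then have "\<gamma> \<odot> (\<Omega> (U \<odot> U) + (U \<odot> U) \<odot> c) = \<gamma> \<odot> (2 *\<^sub>R (U \<odot> \<Omega> U))"
        by (simp add: mul_add_right mul_scale_right del: mul_tr)
      then show ?thesis by (rule canc)
    qed
    have K1: "real n *\<^sub>R \<Psi> U = real n *\<^sub>R (\<gamma> \<odot> (U \<odot> c))" if "\<Omega> U = U \<odot> c" for U
      using KE[of U, THEN conjunct1] that n by (simp add: scaleR_add_left del: mul_tr)
    show ?thesis using K1 K2 K3 by blast
  next
    assume H: "\<forall>X. \<Psi> (pw X n) = \<gamma> \<odot> (X \<odot> \<Omega> (pw X (n - 1))) \<and>
       \<gamma> \<odot> (X \<odot> \<Omega> (pw X (n - 1))) = \<gamma> \<odot> (\<Omega> (pw X (n - 1)) \<odot> X)"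
    have KE: "real (Suc m) *\<^sub>R \<Psi> U = real m *\<^sub>R (\<gamma> \<odot> \<Omega> U) + \<gamma> \<odot> (U \<odot> c) \<and>
      (real (Suc m) * (real (Suc m) - 1) / 2) *\<^sub>R \<Psi> (U \<odot> U) =
        (real m * (real m - 1) / 2) *\<^sub>R (\<gamma> \<odot> \<Omega> (U \<odot> U)) + real m *\<^sub>R (\<gamma> \<odot> (U \<odot> \<Omega> U))" for U
    proof -
      have co: "\<forall>t::real. (\<Sum>j\<le>Suc m. t^j *\<^sub>R (real (Suc m choose j) *\<^sub>R \<Psi> (pw U j))) =
        (\<Sum>j\<le>m. t^j *\<^sub>R (real (m choose j) *\<^sub>R (\<gamma> \<odot> \<Omega> (pw U j)))) +
        (\<Sum>j\<le>m. t^Suc j *\<^sub>R (real (m choose j) *\<^sub>R (\<gamma> \<odot> (U \<odot> \<Omega> (pw U j)))))"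
      proof
        fix t :: real
        have "(\<Sum>j\<le>Suc m. t^j *\<^sub>R (real (Suc m choose j) *\<^sub>R \<Psi> (pw U j))) = \<Psi> (pw (Xt t U) n)"
          by (rule PsiX[symmetric])
        also have "\<dots> = \<gamma> \<odot> (Xt t U \<odot> \<Omega> (pw (Xt t U) (n - 1)))" using H by blast
        also have "\<dots> = (\<Sum>j\<le>m. t^j *\<^sub>R (real (m choose j) *\<^sub>R (\<gamma> \<odot> \<Omega> (pw U j)))) +
          (\<Sum>j\<le>m. t^Suc j *\<^sub>R (real (m choose j) *\<^sub>R (\<gamma> \<odot> (U \<odot> \<Omega> (pw U j)))))"
          unfolding nm OpwX unfolding Xt_def
          by (simp add: mul_sum_left mul_sum_right mul_add_right mul_add_left mul_scale_left mul_scale_right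
              scaleR_sum_right scaleR_add_right sum.distrib mult_ac del: mul_tr tri_pow.simps sum.atMost_Suc)
        finally show "(\<Sum>j\<le>Suc m. t^j *\<^sub>R (real (Suc m choose j) *\<^sub>R \<Psi> (pw U j))) =
        (\<Sum>j\<le>m. t^j *\<^sub>R (real (m choose j) *\<^sub>R (\<gamma> \<odot> \<Omega> (pw U j)))) +
        (\<Sum>j\<le>m. t^Suc j *\<^sub>R (real (m choose j) *\<^sub>R (\<gamma> \<odot> (U \<odot> \<Omega> (pw U j)))))" .
      qed
      have z: "real (m choose Suc m) *\<^sub>R (\<gamma> \<odot> \<Omega> (pw U (Suc m))) = 0" by simp
      note a = coeff12[OF co m1 z]
      show ?thesis using a real_choose2[of "Suc m"] real_choose2[of m]
        by (simp add: pw_2 c_def del: mul_tr tri_pow.simps)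
    qed
    have K3: "U \<odot> \<Omega> U = \<Omega> U \<odot> U" for U
    proof -
      have co: "\<forall>t::real. (\<Sum>j\<le>m. t^j *\<^sub>R (real (m choose j) *\<^sub>R \<Omega> (pw U j))) +
          (\<Sum>j\<le>m. t^Suc j *\<^sub>R (real (m choose j) *\<^sub>R (U \<odot> \<Omega> (pw U j)))) =
        (\<Sum>j\<le>m. t^j *\<^sub>R (real (m choose j) *\<^sub>R \<Omega> (pw U j))) +
          (\<Sum>j\<le>m. t^Suc j *\<^sub>R (real (m choose j) *\<^sub>R (\<Omega> (pw U j) \<odot> U)))"
      proof
        fix t :: real
        have "Xt t U \<odot> \<Omega> (pw (Xt t U) (n - 1)) = \<Omega> (pw (Xt t U) (n - 1)) \<odot> Xt t U"
          using H canc by blast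
        then show "(\<Sum>j\<le>m. t^j *\<^sub>R (real (m choose j) *\<^sub>R \<Omega> (pw U j))) +
          (\<Sum>j\<le>m. t^Suc j *\<^sub>R (real (m choose j) *\<^sub>R (U \<odot> \<Omega> (pw U j)))) =
        (\<Sum>j\<le>m. t^j *\<^sub>R (real (m choose j) *\<^sub>R \<Omega> (pw U j))) +
          (\<Sum>j\<le>m. t^Suc j *\<^sub>R (real (m choose j) *\<^sub>R (\<Omega> (pw U j) \<odot> U)))"
          unfolding nm OpwX unfolding Xt_def
          by (simp add: mul_sum_left mul_sum_right mul_add_right mul_add_left mul_scale_left mul_scale_right
              scaleR_sum_right scaleR_add_right sum.distrib mult_ac del: mul_tr tri_pow.simps sum.atMost_Suc)
      qed
      have "real (m choose 2) *\<^sub>R \<Omega> (pw U 2) + real (m choose 1) *\<^sub>R (U \<odot> \<Omega> (pw U 1)) =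
            real (m choose 2) *\<^sub>R \<Omega> (pw U 2) + real (m choose 1) *\<^sub>R (\<Omega> (pw U 1) \<odot> U)"
        using coeff2c[OF co m1] by simp
      then have "real m *\<^sub>R (U \<odot> \<Omega> U) = real m *\<^sub>R (\<Omega> U \<odot> U)"
        by (simp del: mul_tr tri_pow.simps)
      then show ?thesis using m1 by simp
    qed
    have K2: "\<Omega> (U \<odot> U) + (U \<odot> U) \<odot> c = 2 *\<^sub>R (U \<odot> \<Omega> U)" for U
    proof -
      have "\<gamma> \<odot> ((U \<odot> U) \<odot> c) + \<gamma> \<odot> \<Omega> (U \<odot> U) = 2 *\<^sub>R (\<gamma> \<odot> (U \<odot> \<Omega> U))"
        using alg_i[OF m1 KE[of "U \<odot> U", THEN conjunct1] KE[of U, THEN conjunct2]] .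
      then have "\<gamma> \<odot> (\<Omega> (U \<odot> U) + (U \<odot> U) \<odot> c) = \<gamma> \<odot> (2 *\<^sub>R (U \<odot> \<Omega> U))"
        by (simp add: mul_add_right mul_scale_right add.commute del: mul_tr)
      then show ?thesis by (rule canc)
    qed
    have K1: "real n *\<^sub>R \<Psi> U = real n *\<^sub>R (\<gamma> \<odot> (U \<odot> c))" if "\<Omega> U = U \<odot> c" for U
      using KE[of U, THEN conjunct1] that n by (simp add: scaleR_add_left del: mul_tr)
    show ?thesis using K1 K2 K3 by blast
  qed
  have Om: "\<Omega> V = V \<odot> c" for V
    by (rule omega_form[OF linO cc c_def[symmetric]]) (use main assms(2,3) in auto)
  have Ps: "\<Psi> V = \<gamma> \<odot> (V \<odot> c)" for V
    using main[THEN conjunct1, rule_format, OF Om[of V]] n by (simp del: mul_tr)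
  have "tri_continuous \<Psi>"
  proof (rule tri_cont_lip)
    fix X Y
    have "\<Psi> Y - \<Psi> X = \<gamma> \<odot> ((Y - X) \<odot> c)" by (simp add: Ps mul_diff_left mul_diff_right del: mul_tr)
    also have "tri_norm \<dots> \<le> tri_norm \<gamma> * tri_norm ((Y - X) \<odot> c)" by (rule tri_norm_mul)
    also have "\<dots> \<le> tri_norm \<gamma> * (tri_norm (Y - X) * tri_norm c)"
      by (rule mult_left_mono[OF tri_norm_mul tri_norm_nonneg])
    finally show "tri_norm (\<Psi> Y - \<Psi> X) \<le> (tri_norm \<gamma> * tri_norm c) * tri_norm (Y - X)"
      by (simp add: mult_ac)
  next
    show "0 \<le> tri_norm \<gamma> * tri_norm c" by (simp add: tri_norm_nonneg)
  qed
  moreover have "tri_continuous \<Omega>"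
  proof (rule tri_cont_lip)
    fix X Y
    have "\<Omega> Y - \<Omega> X = (Y - X) \<odot> c" by (simp add: Om mul_diff_left del: mul_tr)
    also have "tri_norm \<dots> \<le> tri_norm (Y - X) * tri_norm c" by (rule tri_norm_mul)
    finally show "tri_norm (\<Omega> Y - \<Omega> X) \<le> tri_norm c * tri_norm (Y - X)"
      by (simp add: mult_ac)
  next
    show "0 \<le> tri_norm c" by (simp add: tri_norm_nonneg)
  qed
  ultimately show ?thesis by simp
qed

end
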